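(* Given an instance of \textsc{Tournament Value Maximization} with a player popularity-based game-value function (with popularity values $v_i$, $i\in N$), a minimum set of disagreeing players can be computed in $\mathcal{O}(k2^k\cdot n+n\log n)$ time, where $n=|N|$ and $k$ is the disagreement between the player popularity values and the strength ordering.
   Context: Players form a finite set $N\subset\mathbb{N}$ with $|N|=n$ a power of $2$; player $i$ is stronger than player $j$ whenever $i>j$. A game-value function $v:N\times N\times\mathbb{N}\to\mathbb{N}$ is player popularity-based if there are player popularity values $v_i\in\mathbb{N}$ ($i\in N$) such that $v(i,j,r)=v_{\max(i,j)}$ for all $i,j\in N$ and $r\in\mathbb{N}$. The disagreement between the player popularity values and the strength ordering is the smallest integer $k$ such that there exists $N'\subseteq N$ with $|N'|\le k$ such that for all $i,j\in N\setminus N'$, $i>j$ implies $v_i\ge v_j$; a set $N'$ of size exactly this $k$ with this property is a minimum set of disagreeing players. *)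

theory Defs
  imports Complex_Main "HOL-Library.Time_Functions"
begin

text \<open>Players are natural numbers; a larger number means a stronger player.
  A game-value function maps (player, player, round) to a natural number.\<close>

definition popularity_based ::
  "nat set \<Rightarrow> (nat \<Rightarrow> nat \<Rightarrow> nat \<Rightarrow> nat) \<Rightarrow> (nat \<Rightarrow> nat) \<Rightarrow> bool" where
  "popularity_based N v pv \<longleftrightarrow> (\<forall>i\<in>N. \<forall>j\<in>N. \<forall>r. v i j r = pv (max i j))"

definition agrees_outside :: "nat set \<Rightarrow> (nat \<Rightarrow> nat) \<Rightarrow> nat set \<Rightarrow> bool" where
  "agrees_outside N pv N' \<longleftrightarrow> N' \<subseteq> N \<and>
     (\<forall>i\<in>N - N'. \<forall>j\<in>N - N'. i > j \<longrightarrow> pv i \<ge> pv j)"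

definition disagreement :: "nat set \<Rightarrow> (nat \<Rightarrow> nat) \<Rightarrow> nat" where
  "disagreement N pv = (LEAST k. \<exists>N'. agrees_outside N pv N' \<and> card N' \<le> k)"

definition min_disagreeing_set :: "nat set \<Rightarrow> (nat \<Rightarrow> nat) \<Rightarrow> nat set \<Rightarrow> bool" where
  "min_disagreeing_set N pv N' \<longleftrightarrow> agrees_outside N pv N' \<and> card N' = disagreement N pv"

fun merge :: "nat list \<Rightarrow> nat list \<Rightarrow> nat list" where
  "merge [] ys = ys"
| "merge xs [] = xs"
| "merge (x # xs) (y # ys) = (if x \<le> y then x # merge xs (y # ys) else y # merge (x # xs) ys)"

fun msort :: "nat list \<Rightarrow> nat list" where
  "msort xs = (let n = length xs in
     if n \<le> 1 then xs else merge (msort (take (n div 2) xs)) (msort (drop (n div 2) xs)))"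

fun attach :: "(nat \<Rightarrow> nat \<Rightarrow> nat \<Rightarrow> nat) \<Rightarrow> nat list \<Rightarrow> (nat \<times> nat) list" where
  "attach v [] = []"
| "attach v (i # is) = (i, v i i 0) # attach v is"

fun descent :: "(nat \<times> nat) list \<Rightarrow> (nat \<times> nat) option" where
  "descent [] = None"
| "descent [p] = None"
| "descent (p # q # ps) = (if snd p > snd q then Some (fst p, fst q) else descent (q # ps))"

fun del :: "nat \<Rightarrow> (nat \<times> nat) list \<Rightarrow> (nat \<times> nat) list" where
  "del a [] = []"
| "del a (p # ps) = (if fst p = a then ps else p # del a ps)"

fun solve :: "nat \<Rightarrow> (nat \<times> nat) list \<Rightarrow> nat list option" where
  "solve 0 ps = (case descent ps of None \<Rightarrow> Some [] | Some ab \<Rightarrow> None)"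
| "solve (Suc d) ps = (case descent ps of None \<Rightarrow> Some []
     | Some (a, b) \<Rightarrow> (case solve d (del a ps) of Some r \<Rightarrow> Some (a # r)
         | None \<Rightarrow> (case solve d (del b ps) of Some r \<Rightarrow> Some (b # r) | None \<Rightarrow> None)))"

fun iter :: "nat \<Rightarrow> nat \<Rightarrow> (nat \<times> nat) list \<Rightarrow> nat list" where
  "iter 0 d ps = []"
| "iter (Suc f) d ps = (case solve d ps of Some r \<Rightarrow> r | None \<Rightarrow> iter f (Suc d) ps)"

fun min_disagree_alg :: "nat list \<Rightarrow> (nat \<Rightarrow> nat \<Rightarrow> nat \<Rightarrow> nat) \<Rightarrow> nat list" where
  "min_disagree_alg xs v = (let ps = attach v (msort xs) in iter (Suc (length ps)) 0 ps)"

text \<open>Step-counting cost functions (one unit per function call, in the style of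
  the time functions of HOL-Library.Time_Functions; a query to the game-value oracle
  costs one unit).\<close>

fun T_merge :: "nat list \<Rightarrow> nat list \<Rightarrow> nat" where
  "T_merge [] ys = 1"
| "T_merge xs [] = 1"
| "T_merge (x # xs) (y # ys) = (if x \<le> y then T_merge xs (y # ys) else T_merge (x # xs) ys) + 1"

fun T_msort :: "nat list \<Rightarrow> nat" where
  "T_msort xs = (let n = length xs in T_length xs +
     (if n \<le> 1 then 0 else
        T_take (n div 2) xs + T_drop (n div 2) xs
        + T_msort (take (n div 2) xs) + T_msort (drop (n div 2) xs)
        + T_merge (msort (take (n div 2) xs)) (msort (drop (n div 2) xs)))) + 1"

fun T_attach :: "nat list \<Rightarrow> nat" where
  "T_attach [] = 1"
| "T_attach (i # is) = 1 + T_attach is + 1"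

fun T_descent :: "(nat \<times> nat) list \<Rightarrow> nat" where
  "T_descent [] = 1"
| "T_descent [p] = 1"
| "T_descent (p # q # ps) = (if snd p > snd q then 0 else T_descent (q # ps)) + 1"

fun T_del :: "nat \<Rightarrow> (nat \<times> nat) list \<Rightarrow> nat" where
  "T_del a [] = 1"
| "T_del a (p # ps) = (if fst p = a then 0 else T_del a ps) + 1"

fun T_solve :: "nat \<Rightarrow> (nat \<times> nat) list \<Rightarrow> nat" where
  "T_solve 0 ps = T_descent ps + 1"
| "T_solve (Suc d) ps = T_descent ps + (case descent ps of None \<Rightarrow> 0
     | Some (a, b) \<Rightarrow> T_del a ps + T_solve d (del a ps) +
         (case solve d (del a ps) of Some r \<Rightarrow> 0
          | None \<Rightarrow> T_del b ps + T_solve d (del b ps))) + 1"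

fun T_iter :: "nat \<Rightarrow> nat \<Rightarrow> (nat \<times> nat) list \<Rightarrow> nat" where
  "T_iter 0 d ps = 1"
| "T_iter (Suc f) d ps = T_solve d ps + (case solve d ps of Some r \<Rightarrow> 0 | None \<Rightarrow> T_iter f (Suc d) ps) + 1"

definition T_min_disagree_alg :: "nat list \<Rightarrow> (nat \<Rightarrow> nat \<Rightarrow> nat \<Rightarrow> nat) \<Rightarrow> nat" where
  "T_min_disagree_alg xs v = (let ys = msort xs; ps = attach v ys in
     T_msort xs + T_attach ys + T_length ps + T_iter (Suc (length ps)) 0 ps + 1)"

end

theory Submission imports Defs "HOL-Library.Multiset" begin

declare msort.simps[simp del] T_msort.simps[simp del]

lemma mset_merge: "mset (merge xs ys) = mset xs + mset ys"
  by (induction xs ys rule: merge.induct) auto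

lemma set_merge: "set (merge xs ys) = set xs \<union> set ys"
  by (metis mset_merge set_mset_mset set_mset_union)

lemma sorted_merge: "sorted xs \<Longrightarrow> sorted ys \<Longrightarrow> sorted (merge xs ys)"
  by (induction xs ys rule: merge.induct) (auto simp: set_merge)

lemma mset_msort: "mset (msort xs) = mset xs"
proof (induction xs rule: msort.induct)
  case (1 xs)
  show ?case
    by (subst msort.simps) (auto simp: Let_def mset_merge 1 simp flip: mset_append)
qed

lemma sorted_msort: "sorted (msort xs)"
proof (induction xs rule: msort.induct)
  case (1 xs)
  show ?case
    apply (subst msort.simps)
    using 1 by (auto simp: Let_def sorted_merge intro: sorted01)
qed

lemma length_merge: "length (merge xs ys) = length xs + length ys"
  by (metis mset_merge size_mset size_union)

lemma length_msort: "length (msort xs) = length xs"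
  by (metis mset_msort size_mset)

lemma T_merge_le: "T_merge xs ys \<le> length xs + length ys + 1"
  by (induction xs ys rule: T_merge.induct) auto

lemma T_msort_le: "length xs = 2 ^ m \<Longrightarrow> T_msort xs \<le> 8 * 2^m * (m + 1)"
proof (induction m arbitrary: xs)
  case 0
  then show ?case by (subst T_msort.simps) (simp add: T_length)
next
  case (Suc m)
  let ?h = "length xs div 2"
  have h: "?h = 2^m" using Suc.prems by simp
  have lt: "length (take ?h xs) = 2^m" "length (drop ?h xs) = 2^m" using Suc.prems h by auto
  have A: "T_msort (take ?h xs) \<le> 8 * 2^m * (m+1)" using Suc.IH lt by blast
  have B: "T_msort (drop ?h xs) \<le> 8 * 2^m * (m+1)" using Suc.IH lt by blast
  have C: "T_merge (msort (take ?h xs)) (msort (drop ?h xs)) \<le> 2^m + 2^m + 1"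
    using T_merge_le[of "msort (take ?h xs)" "msort (drop ?h xs)"] lt by (simp add: length_msort)
  have "T_msort xs = T_length xs + (T_take ?h xs + T_drop ?h xs
        + T_msort (take ?h xs) + T_msort (drop ?h xs)
        + T_merge (msort (take ?h xs)) (msort (drop ?h xs))) + 1"
  proof -
    have "(1::nat) \<le> 2^m" by simp
    moreover have "length xs = 2 * 2^m" using Suc.prems by simp
    ultimately have "\<not> length xs \<le> 1" by linarith
    then show ?thesis by (subst T_msort.simps) (simp add: Let_def)
  qed
  also have "\<dots> \<le> (2*2^m + 1) + ((2^m+1) + (2^m+1) + 8 * 2^m * (m+1) + 8 * 2^m * (m+1) + (2^m + 2^m + 1)) + 1"
    using A B C Suc.prems h by (simp add: T_length T_take T_drop algebra_simps)
  also have "\<dots> \<le> 8 * 2^Suc m * (Suc m + 1)"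
  proof -
    have "(1::nat) \<le> 2^m" by simp
    then show ?thesis by (simp add: algebra_simps)
  qed
  finally show ?case .
qed

definition good :: "nat set \<Rightarrow> (nat \<times> nat) list \<Rightarrow> bool" where
  "good S ps \<longleftrightarrow> sorted (map snd (filter (\<lambda>p. fst p \<notin> S) ps))"

lemma descent_None: "descent ps = None \<Longrightarrow> sorted (map snd ps)"
  by (induction ps rule: descent.induct) (auto split: if_splits)

lemma sorted_descent: "sorted (map snd ps) \<Longrightarrow> descent ps = None"
  by (induction ps rule: descent.induct) auto

lemma descent_Some: "descent ps = Some (a, b) \<Longrightarrow>
  \<exists>us p q ws. ps = us @ p # q # ws \<and> fst p = a \<and> fst q = b \<and> snd q < snd p"
proof (induction ps rule: descent.induct)
  case (3 p q ps)
  show ?case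
  proof (cases "snd p > snd q")
    case True
    then show ?thesis using 3 by (intro exI[of _ "[]"]) auto
  next
    case False
    then obtain us p' q' ws where "q # ps = us @ p' # q' # ws" "fst p' = a" "fst q' = b" "snd q' < snd p'"
      using 3 by auto
    then show ?thesis by (intro exI[of _ "p # us"]) auto
  qed
qed auto

lemma del_filter: "distinct (map fst ps) \<Longrightarrow> del a ps = filter (\<lambda>p. fst p \<noteq> a) ps"
proof (induction ps)
  case (Cons p ps)
  then show ?case
    apply (auto intro!: filter_True[symmetric])
    by (metis fst_conv image_eqI)
qed simp

lemma good_del: "distinct (map fst ps) \<Longrightarrow> good S (del a ps) = good (insert a S) ps"
  by (simp add: good_def del_filter conj_commute)

lemma distinct_del: "distinct (map fst ps) \<Longrightarrow> distinct (map fst (del a ps))"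
  by (simp add: del_filter distinct_map_filter)

lemma set_del: "set (del a ps) \<subseteq> set ps"
  by (induction ps) auto

lemma length_del: "length (del a ps) \<le> length ps"
  by (induction ps) auto

lemma good_Some_descent:
  assumes "descent ps = Some (a, b)" "good S ps"
  shows "a \<in> S \<or> b \<in> S"
proof (rule ccontr)
  assume n: "\<not> (a \<in> S \<or> b \<in> S)"
  obtain us p q ws where d: "ps = us @ p # q # ws" "fst p = a" "fst q = b" "snd q < snd p"
    using descent_Some[OF assms(1)] by blast
  have "sorted (map snd (filter (\<lambda>p. fst p \<notin> S) us) @ snd p # snd q # map snd (filter (\<lambda>p. fst p \<notin> S) ws))"
    using assms(2) n d by (simp add: good_def)
  then have "sorted (snd p # snd q # map snd (filter (\<lambda>p. fst p \<notin> S) ws))"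
    using sorted_append by blast
  then show False using d by simp
qed

lemma solve_sound:
  "distinct (map fst ps) \<Longrightarrow> solve d ps = Some r \<Longrightarrow>
   length r \<le> d \<and> good (set r) ps \<and> set r \<subseteq> fst ` set ps"
proof (induction d arbitrary: ps r)
  case 0
  then show ?case
    by (auto simp: good_def split: option.splits dest: descent_None)
next
  case (Suc d)
  show ?case
  proof (cases "descent ps")
    case None
    then show ?thesis using Suc.prems by (auto simp: good_def dest: descent_None)
  next
    case (Some ab)
    then obtain a b where ab: "descent ps = Some (a, b)" by (cases ab) auto
    obtain us p q ws where d: "ps = us @ p # q # ws" "fst p = a" "fst q = b" "snd q < snd p"
      using descent_Some[OF ab] by blast
    have ain: "a \<in> fst ` set ps" "b \<in> fst ` set ps" using d by force+
    have dd: "distinct (map fst (del x ps))" for x using distinct_del Suc.prems(1) by blast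
    have sub: "fst ` set (del x ps) \<subseteq> fst ` set ps" for x using set_del by blast
    show ?thesis
    proof (cases "solve d (del a ps)")
      case (Some r')
      then have r: "r = a # r'" using Suc.prems ab by simp
      have "length r' \<le> d \<and> good (set r') (del a ps) \<and> set r' \<subseteq> fst ` set (del a ps)"
        using Suc.IH[OF dd Some] .
      moreover have "set r' \<subseteq> fst ` set ps" using calculation sub by blast
      ultimately show ?thesis using r good_del[OF Suc.prems(1)] ain by auto
    next
      case None
      then obtain r' where S': "solve d (del b ps) = Some r'" and r: "r = b # r'"
        using Suc.prems ab by (auto split: option.splits)
      have "length r' \<le> d \<and> good (set r') (del b ps) \<and> set r' \<subseteq> fst ` set (del b ps)"
        using Suc.IH[OF dd S'] .
      moreover have "set r' \<subseteq> fst ` set ps" using calculation sub by blast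
      ultimately show ?thesis using r good_del[OF Suc.prems(1)] ain by auto
    qed
  qed
qed

lemma solve_complete:
  "distinct (map fst ps) \<Longrightarrow> finite S \<Longrightarrow> card S \<le> d \<Longrightarrow> good S ps \<Longrightarrow> solve d ps \<noteq> None"
proof (induction d arbitrary: ps S)
  case 0
  then have "S = {}" by simp
  then have "descent ps = None" using 0 by (simp add: good_def sorted_descent)
  then show ?case by simp
next
  case (Suc d)
  show ?case
  proof (cases "descent ps")
    case None
    then show ?thesis by simp
  next
    case (Some ab)
    then obtain a b where ab: "descent ps = Some (a, b)" by (cases ab) auto
    have dd: "distinct (map fst (del x ps))" for x using distinct_del Suc.prems(1) by blast
    have key: "solve d (del x ps) \<noteq> None" if "x \<in> S" for x
    proof -
      have "good (S - {x}) (del x ps)" using good_del[OF Suc.prems(1)] Suc.prems(4) that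
        by (simp add: insert_absorb)
      moreover have "card (S - {x}) \<le> d" using Suc.prems(2,3) that by simp
      ultimately show ?thesis using Suc.IH[OF dd] Suc.prems(2) by blast
    qed
    have "a \<in> S \<or> b \<in> S" using good_Some_descent[OF ab Suc.prems(4)] .
    then show ?thesis using key[of a] key[of b] ab by (auto split: option.splits)
  qed
qed

lemma T_descent_le: "T_descent ps \<le> length ps + 1"
  by (induction ps rule: T_descent.induct) auto

lemma T_del_le: "T_del a ps \<le> length ps + 1"
  by (induction ps) auto

lemma T_solve_le: "T_solve d ps \<le> 4 * (length ps + 1) * (2 ^ (d+1) - 1)"
proof (induction d arbitrary: ps)
  case 0
  then show ?case using T_descent_le[of ps] by simp
next
  case (Suc d)
  define L where "L = length ps"
  define P :: nat where "P = 2 ^ (d+1)"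
  have P2: "P \<ge> 2" unfolding P_def
    by (metis add_2_eq_Suc' le_add2 one_le_numeral power_increasing power_one_right)
  have mono: "T_solve d (del x ps) \<le> 4 * (L + 1) * (P - 1)" for x
  proof -
    have "T_solve d (del x ps) \<le> 4 * (length (del x ps) + 1) * (P - 1)" using Suc.IH P_def by simp
    also have "\<dots> \<le> 4 * (L + 1) * (P - 1)" using length_del[of x ps] L_def
      by (intro mult_right_mono) auto
    finally show ?thesis .
  qed
  have "T_solve (Suc d) ps \<le> (L+1) + ((L+1) + 4 * (L + 1) * (P - 1) + ((L+1) + 4 * (L + 1) * (P - 1))) + 1"
  proof (cases "descent ps")
    case None
    then show ?thesis using T_descent_le[of ps] unfolding L_def by simp
  next
    case (Some ab)
    then obtain a b where ab: "descent ps = Some (a, b)" by (cases ab) auto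
    have e: "T_solve (Suc d) ps = T_descent ps + (T_del a ps + T_solve d (del a ps) +
         (case solve d (del a ps) of Some r \<Rightarrow> 0
          | None \<Rightarrow> T_del b ps + T_solve d (del b ps))) + 1"
      using ab by simp
    have "(case solve d (del a ps) of Some r \<Rightarrow> 0
          | None \<Rightarrow> T_del b ps + T_solve d (del b ps)) \<le> (L+1) + 4 * (L + 1) * (P - 1)"
      using T_del_le[of b ps] mono[of b] unfolding L_def by (auto split: option.splits)
    then show ?thesis unfolding e using T_descent_le[of ps] T_del_le[of a ps] mono[of a]
      unfolding L_def by linarith
  qed
  also have "\<dots> \<le> 4 * (L + 1) * (2 * P - 1)"
  proof -
    obtain Q where Q: "P = Q + 2" using P2 by (metis add.commute le_Suc_ex)
    show ?thesis unfolding Q by (simp add: algebra_simps)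
  qed
  finally show ?case unfolding L_def P_def by simp
qed

lemma iter_eq:
  "solve K ps \<noteq> None \<Longrightarrow> (\<forall>j<K. solve j ps = None) \<Longrightarrow> d \<le> K \<Longrightarrow> K < d + f
   \<Longrightarrow> iter f d ps = the (solve K ps)"
proof (induction f arbitrary: d)
  case 0
  then show ?case by simp
next
  case (Suc f)
  show ?case
  proof (cases "d = K")
    case True
    then show ?thesis using Suc.prems by (auto split: option.splits)
  next
    case False
    then have "solve d ps = None" "Suc d \<le> K" using Suc.prems by auto
    then show ?thesis using Suc.IH[of "Suc d"] Suc.prems by simp
  qed
qed

lemma T_iter_le:
  "solve K ps \<noteq> None \<Longrightarrow> d \<le> K \<Longrightarrow>
   T_iter f d ps \<le> (K + 1 - d) * (4 * (length ps + 1) * 2 ^ (K+1) + 1)"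
proof (induction f arbitrary: d)
  case 0
  then show ?case by simp
next
  case (Suc f)
  define X where "X = 4 * (length ps + 1) * 2 ^ (K+1) + 1"
  have "T_solve d ps \<le> 4 * (length ps + 1) * (2 ^ (d+1) - 1)" by (rule T_solve_le)
  also have "\<dots> \<le> 4 * (length ps + 1) * 2 ^ (K+1)"
    using Suc.prems(2) by (intro mult_left_mono) (auto intro: order.trans[OF diff_le_self] power_increasing)
  finally have TS: "T_solve d ps + 1 \<le> X" unfolding X_def by simp
  show ?case
  proof (cases "solve d ps")
    case (Some r)
    then have "T_iter (Suc f) d ps = T_solve d ps + 1" by simp
    also have "\<dots> \<le> X" by (rule TS)
    also have "\<dots> \<le> (K + 1 - d) * X" 
    proof -
      have "1 \<le> K + 1 - d" using Suc.prems(2) by simp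
      then show ?thesis using mult_le_mono1[of 1 "K + 1 - d" X] by simp
    qed
    finally show ?thesis unfolding X_def .
  next
    case None
    then have dK: "Suc d \<le> K" using Suc.prems by (cases "d = K") auto
    have "T_iter (Suc f) d ps = T_solve d ps + 1 + T_iter f (Suc d) ps" using None by simp
    also have "\<dots> \<le> X + (K + 1 - Suc d) * X" using TS Suc.IH[OF Suc.prems(1) dK] unfolding X_def
      by linarith
    also have "\<dots> = (K + 1 - d) * X"
    proof -
      have "K + 1 - d = Suc (K + 1 - Suc d)" using dK by simp
      then show ?thesis by simp
    qed
    finally show ?thesis unfolding X_def .
  qed
qed

lemma T_attach_eq: "T_attach ys = 2 * length ys + 1"
  by (induction ys) auto

lemma attach_eq: "(\<forall>i\<in>set ys. v i i 0 = pv i) \<Longrightarrow> attach v ys = map (\<lambda>i. (i, pv i)) ys"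
  by (induction ys) auto

lemma sorted_map_iff:
  "sorted zs \<Longrightarrow> distinct zs \<Longrightarrow>
   sorted (map pv zs) \<longleftrightarrow> (\<forall>i\<in>set zs. \<forall>j\<in>set zs. i > j \<longrightarrow> pv i \<ge> (pv j :: nat))"
proof (induction zs)
  case (Cons z zs)
  have lt: "\<forall>y\<in>set zs. z < y" using Cons.prems by (auto simp: order.strict_iff_order)
  have IH: "sorted (map pv zs) \<longleftrightarrow> (\<forall>i\<in>set zs. \<forall>j\<in>set zs. i > j \<longrightarrow> pv i \<ge> pv j)"
    using Cons by simp
  have "(\<forall>i\<in>set (z#zs). \<forall>j\<in>set (z#zs). i > j \<longrightarrow> pv i \<ge> pv j) \<longleftrightarrow>
        (\<forall>y\<in>set zs. pv z \<le> pv y) \<and> (\<forall>i\<in>set zs. \<forall>j\<in>set zs. i > j \<longrightarrow> pv i \<ge> pv j)"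
  proof
    assume H: "\<forall>i\<in>set (z#zs). \<forall>j\<in>set (z#zs). i > j \<longrightarrow> pv i \<ge> pv j"
    show "(\<forall>y\<in>set zs. pv z \<le> pv y) \<and> (\<forall>i\<in>set zs. \<forall>j\<in>set zs. i > j \<longrightarrow> pv i \<ge> pv j)"
    proof
      show "\<forall>y\<in>set zs. pv z \<le> pv y" using H lt by simp
      show "\<forall>i\<in>set zs. \<forall>j\<in>set zs. i > j \<longrightarrow> pv i \<ge> pv j" using H by simp
    qed
  next
    assume H: "(\<forall>y\<in>set zs. pv z \<le> pv y) \<and> (\<forall>i\<in>set zs. \<forall>j\<in>set zs. i > j \<longrightarrow> pv i \<ge> pv j)"
    show "\<forall>i\<in>set (z#zs). \<forall>j\<in>set (z#zs). i > j \<longrightarrow> pv i \<ge> pv j"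
    proof (intro ballI impI)
      fix i j assume ij: "i \<in> set (z#zs)" "j \<in> set (z#zs)" "i > j"
      show "pv i \<ge> pv j"
      proof (cases "i = z")
        case True
        then have "j \<noteq> z" using ij by simp
        then have "j \<in> set zs" using ij by simp
        then have "z < j" using lt by blast
        then show ?thesis using True ij by simp
      next
        case False
        then have i: "i \<in> set zs" using ij by simp
        show ?thesis
        proof (cases "j = z")
          case True then show ?thesis using H i by simp
        next
          case False then show ?thesis using H i ij by simp
        qed
      qed
    qed
  qed
  then show ?case using IH by simp
qed simp

lemma agrees_iff:
  assumes "sorted ys" "distinct ys" "S \<subseteq> set ys"
  shows "agrees_outside (set ys) pv S \<longleftrightarrow> sorted (map pv (filter (\<lambda>i. i \<notin> S) ys))"
proof -
  have "sorted (filter (\<lambda>i. i \<notin> S) ys)" using assms(1) by (simp add: sorted_wrt_filter)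
  moreover have "distinct (filter (\<lambda>i. i \<notin> S) ys)" using assms(2) by simp
  ultimately show ?thesis using assms(3) unfolding agrees_outside_def
    by (subst sorted_map_iff) auto
qed

lemma lin:
  fixes Z A E k B n :: nat
  shows "Z \<le> 16*A + 16*E + k + 1 \<Longrightarrow> n \<le> B + 1 \<Longrightarrow> E \<le> A + B + 1 \<Longrightarrow> k \<le> A \<Longrightarrow>
    8*B + 8*n + (2*n+1) + (n+1) + Z + 1 \<le> 40*(A + B + 1)"
  by (simp add: algebra_simps)

lemma arith_final:
  fixes n m k :: nat
  assumes n: "n = 2 ^ m"
  shows "8 * 2^m * (m+1) + (2*n+1) + (n+1) + (k+1) * (4 * (n+1) * 2^(k+1) + 1) + 1
         \<le> 40 * (k * 2^k * n + n * m + 1)"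
proof -
  have n1: "1 \<le> n" using n by simp
  have nm: "n \<le> n * m + 1"
  proof (cases m)
    case 0 then show ?thesis using n by simp
  next
    case (Suc m') then show ?thesis by simp
  qed
  have E1: "1 \<le> 2^k * n" using n1 by simp
  have Ek: "2^k * n \<le> k * 2^k * n + n * m + 1"
  proof (cases k)
    case 0 then show ?thesis using nm by simp
  next
    case (Suc k')
    have "2^k * n \<le> k * 2^k * n" using Suc by simp
    then show ?thesis by linarith
  qed
  have kA: "k \<le> k * 2^k * n" using E1 by simp
  have "4 * (n+1) * 2^(k+1) = 8 * (n+1) * 2^k" by simp
  also have "\<dots> \<le> 16 * (2^k * n)" using n1 by simp
  finally have "(k+1) * (4 * (n+1) * 2^(k+1) + 1) \<le> (k+1) * (16 * (2^k * n) + 1)"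
    by (intro mult_le_mono2) simp
  also have "\<dots> = 16 * (k * 2^k * n) + 16 * (2^k * n) + k + 1" by (simp add: algebra_simps)
  finally have K: "(k+1) * (4 * (n+1) * 2^(k+1) + 1) \<le> 16 * (k * 2^k * n) + 16 * (2^k * n) + k + 1" .
  have M: "8 * 2^m * (m+1) = 8 * (n * m) + 8 * n" using n by (simp add: algebra_simps)
  show ?thesis unfolding M by (rule lin[OF K nm Ek kA])
qed

theorem proposition2:
  "\<exists>C::real. \<forall>(xs::nat list) (v::nat \<Rightarrow> nat \<Rightarrow> nat \<Rightarrow> nat) (pv::nat \<Rightarrow> nat).
     distinct xs \<longrightarrow> (\<exists>m::nat. length xs = 2 ^ m) \<longrightarrow> popularity_based (set xs) v pv \<longrightarrow>
     (let n = length xs; k = disagreement (set xs) pv in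
        min_disagreeing_set (set xs) pv (set (min_disagree_alg xs v)) \<and>
        real (T_min_disagree_alg xs v)
          \<le> C * (real k * 2 ^ k * real n + real n * log 2 (real n) + 1))"
proof (intro exI[of _ 40] allI impI)
  fix xs :: "nat list" and v :: "nat \<Rightarrow> nat \<Rightarrow> nat \<Rightarrow> nat" and pv :: "nat \<Rightarrow> nat"
  assume dist: "distinct xs" and ex: "\<exists>m::nat. length xs = 2 ^ m" and pop: "popularity_based (set xs) v pv"
  obtain m where nm: "length xs = 2 ^ m" using ex by blast
  define ys where "ys = msort xs"
  define ps where "ps = attach v ys"
  define N where "N = set xs"
  define n where "n = length xs"
  define k where "k = disagreement N pv"
  have ys_sorted: "sorted ys" unfolding ys_def by (rule sorted_msort)
  have ys_mset: "mset ys = mset xs" unfolding ys_def by (rule mset_msort)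
  have ys_dist: "distinct ys" using ys_mset dist mset_eq_imp_distinct_iff by blast
  have ys_set: "set ys = N" using ys_mset unfolding N_def by (metis set_mset_mset)
  have ys_len: "length ys = n" using ys_mset unfolding n_def by (metis size_mset)
  have vpv: "\<forall>i\<in>set ys. v i i 0 = pv i" using pop ys_set unfolding popularity_based_def N_def by auto
  have ps_eq: "ps = map (\<lambda>i. (i, pv i)) ys" unfolding ps_def using attach_eq[of ys v pv] vpv by blast
  have ps_dist: "distinct (map fst ps)" using ps_eq ys_dist by (simp add: comp_def)
  have ps_fst: "fst ` set ps = N" using ps_eq ys_set by force
  have ps_len: "length ps = n" using ps_eq ys_len by simp
  have good_iff: "good S ps \<longleftrightarrow> agrees_outside N pv S" if "S \<subseteq> N" for S
  proof -
    have "good S ps \<longleftrightarrow> sorted (map pv (filter (\<lambda>i. i \<notin> S) ys))"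
      unfolding good_def ps_eq by (simp add: filter_map comp_def)
    also have "\<dots> \<longleftrightarrow> agrees_outside N pv S"
      using agrees_iff[OF ys_sorted ys_dist, of S pv] that ys_set by simp
    finally show ?thesis .
  qed
  have finN: "finite N" unfolding N_def by simp
  have agN: "agrees_outside N pv N" unfolding agrees_outside_def by simp
  have exN: "\<exists>N'. agrees_outside N pv N' \<and> card N' \<le> card N" using agN by blast
  have kex: "\<exists>N'. agrees_outside N pv N' \<and> card N' \<le> k"
    unfolding k_def disagreement_def using LeastI_ex[of "\<lambda>k. \<exists>N'. agrees_outside N pv N' \<and> card N' \<le> k"] exN by blast
  have kle: "k \<le> card N" unfolding k_def disagreement_def by (rule Least_le) (rule exN)
  have cardN: "card N = n" unfolding N_def n_def using dist by (simp add: distinct_card)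
  have kmin: "\<not> (\<exists>N'. agrees_outside N pv N' \<and> card N' \<le> j)" if "j < k" for j
    using not_less_Least[of j "\<lambda>k. \<exists>N'. agrees_outside N pv N' \<and> card N' \<le> k"] that
    unfolding k_def disagreement_def by blast
  have solk: "solve k ps \<noteq> None"
  proof -
    obtain S where S: "agrees_outside N pv S" "card S \<le> k" using kex by blast
    have SN: "S \<subseteq> N" using S(1) unfolding agrees_outside_def by blast
    then have "finite S" using finN finite_subset by blast
    moreover have "good S ps" using good_iff[OF SN] S(1) by blast
    ultimately show ?thesis using solve_complete[OF ps_dist _ S(2)] by blast
  qed
  have solj: "\<forall>j<k. solve j ps = None"
  proof (intro allI impI)
    fix j assume j: "j < k"
    show "solve j ps = None"
    proof (rule ccontr)
      assume "solve j ps \<noteq> None"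
      then obtain r where r: "solve j ps = Some r" by blast
      have h: "length r \<le> j" "good (set r) ps" "set r \<subseteq> N" using solve_sound[OF ps_dist r] ps_fst by auto
      have "agrees_outside N pv (set r)" using good_iff[OF h(3)] h(2) by blast
      moreover have "card (set r) \<le> j" using h(1) card_length order.trans by blast
      ultimately show False using kmin[OF j] by blast
    qed
  qed
  obtain r where r: "solve k ps = Some r" using solk by blast
  have alg: "min_disagree_alg xs v = r"
  proof -
    have "min_disagree_alg xs v = iter (Suc (length ps)) 0 ps"
      unfolding ps_def ys_def by (simp only: min_disagree_alg.simps Let_def)
    also have "\<dots> = iter (Suc n) 0 ps" using ps_len by simp
    also have "\<dots> = the (solve k ps)" by (rule iter_eq[OF solk solj]) (use kle cardN in auto)
    finally show ?thesis using r by simp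
  qed
  have h: "length r \<le> k" "good (set r) ps" "set r \<subseteq> N" using solve_sound[OF ps_dist r] ps_fst by auto
  have ag: "agrees_outside N pv (set r)" using good_iff[OF h(3)] h(2) by blast
  have ck: "card (set r) \<le> k" using h(1) card_length order.trans by blast
  have "\<not> card (set r) < k" using kmin ag by blast
  then have "card (set r) = k" using ck by simp
  then have part1: "min_disagreeing_set N pv (set (min_disagree_alg xs v))"
    unfolding min_disagreeing_set_def alg k_def using ag by simp
  have T: "T_min_disagree_alg xs v = T_msort xs + T_attach ys + T_length ps + T_iter (Suc (length ps)) 0 ps + 1"
    unfolding T_min_disagree_alg_def ps_def ys_def by (simp add: Let_def)
  have T1: "T_msort xs \<le> 8 * 2^m * (m+1)" using T_msort_le[OF nm] .
  have T2: "T_attach ys = 2*n+1" using T_attach_eq ys_len by simp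
  have T3: "T_length ps = n + 1" using ps_len by (simp add: T_length)
  have T4: "T_iter (Suc (length ps)) 0 ps \<le> (k+1) * (4 * (n+1) * 2^(k+1) + 1)"
    using T_iter_le[OF solk, of 0 "Suc (length ps)"] ps_len by simp
  have Tn: "T_min_disagree_alg xs v \<le> 40 * (k * 2^k * n + n * m + 1)"
    using T T1 T2 T3 T4 arith_final[of n m k] nm n_def by linarith
  have logn: "log 2 (real n) = real m" using nm unfolding n_def by (simp add: log_nat_power)
  have "real (T_min_disagree_alg xs v) \<le> real (40 * (k * 2^k * n + n * m + 1))"
    using Tn by linarith
  also have "\<dots> = 40 * (real k * 2 ^ k * real n + real n * log 2 (real n) + 1)"
    using logn by simp
  finally show "let n = length xs; k = disagreement (set xs) pv in
        min_disagreeing_set (set xs) pv (set (min_disagree_alg xs v)) \<and>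
        real (T_min_disagree_alg xs v)
          \<le> 40 * (real k * 2 ^ k * real n + real n * log 2 (real n) + 1)"
    using part1 unfolding Let_def N_def n_def k_def by simp
qed

end
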